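(* Assume $f$ has a unique global maximizer, contains no weak epistasis, and every order-1 epistasis of $f$ is strict. Then every directed cycle of the epistatic graph lies in a clique: if $v_0\rightarrow v_1\rightarrow\cdots\rightarrow v_{c-1}\rightarrow v_0$ is a directed cycle, then $v_a\rightarrow v_b$ for all distinct $a,b\in\{0,\dots,c-1\}$.
   Context: Fix $\ell\ge1$, loci $V=\{0,\dots,\ell-1\}$, chromosomes $\vec y\in\{0,1\}^V$, fitness $f:\{0,1\}^V\to\mathbb R$ (maximized) with unique global maximizer $g$. An assignment $A$ is a set of pairs $(v,a)$ with at most one pair per locus; coverage $\mathcal C(A)$; $A[v]$ its allele at $v$. $\Psi_A$ is the set of chromosomes agreeing with $A$ on $\mathcal C(A)$ with maximum fitness among such chromosomes; $\Psi_A[v]=\{\psi_v:\psi\in\Psi_A\}$. Epistasis: for $v\in V$ and nonempty $S\subseteq V\setminus\{v\}$, $S\Rightarrow v$ iff for every $s\in S$ there exists an assignment $A$ with $\mathcal C(A)=S$ and $\Psi_A[v]\neq\Psi_{A\setminus\{(s,A[s])\}}[v]$. An epistasis $S\Rightarrow v$ with $|S|\ge2$ is weak if no nonempty proper subset $T\subsetneq S$ has $T\Rightarrow v$. An order-1 epistasis $\{u\}\Rightarrow v$ is strict, written $u\rightarrow v$, if $\Psi_{\{(u,1-g[u])\}}[v]=\{1-g[v]\}$. The epistatic graph is the directed graph on $V$ with edge $u\to v$ iff $\{u\}\Rightarrow v$. A clique is a set of vertices $C$ with $a\rightarrow b$ for all distinct $a,b\in C$. *)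

theory Defs
  imports Complex_Main
begin

text \<open>Loci are V = {0..<l}. Alleles 0/1 are encoded as False/True.
  An assignment is a partial map nat => bool option with domain inside V
  (at most one allele per locus); its coverage is its domain.\<close>

definition chroms :: "nat \<Rightarrow> (nat \<Rightarrow> bool) set" where
  "chroms l = {y. \<forall>v. v \<notin> {0..<l} \<longrightarrow> y v = False}"

definition agrees :: "(nat \<Rightarrow> bool) \<Rightarrow> (nat \<Rightarrow> bool option) \<Rightarrow> bool" where
  "agrees y A \<longleftrightarrow> (\<forall>v a. A v = Some a \<longrightarrow> y v = a)"

definition Psi :: "nat \<Rightarrow> ((nat \<Rightarrow> bool) \<Rightarrow> real) \<Rightarrow> (nat \<Rightarrow> bool option) \<Rightarrow> (nat \<Rightarrow> bool) set" where
  "Psi l f A = {y \<in> chroms l. agrees y A \<and>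
                  (\<forall>z \<in> chroms l. agrees z A \<longrightarrow> f z \<le> f y)}"

definition Psi_at :: "nat \<Rightarrow> ((nat \<Rightarrow> bool) \<Rightarrow> real) \<Rightarrow> (nat \<Rightarrow> bool option) \<Rightarrow> nat \<Rightarrow> bool set" where
  "Psi_at l f A v = (\<lambda>y. y v) ` Psi l f A"

definition epistasis :: "nat \<Rightarrow> ((nat \<Rightarrow> bool) \<Rightarrow> real) \<Rightarrow> nat set \<Rightarrow> nat \<Rightarrow> bool" where
  "epistasis l f S v \<longleftrightarrow> v \<in> {0..<l} \<and> S \<noteq> {} \<and> S \<subseteq> {0..<l} - {v} \<and>
     (\<forall>s \<in> S. \<exists>A. dom A = S \<and> Psi_at l f A v \<noteq> Psi_at l f (A(s := None)) v)"

definition weak_epistasis :: "nat \<Rightarrow> ((nat \<Rightarrow> bool) \<Rightarrow> real) \<Rightarrow> nat set \<Rightarrow> nat \<Rightarrow> bool" where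
  "weak_epistasis l f S v \<longleftrightarrow> epistasis l f S v \<and> card S \<ge> 2 \<and>
     \<not> (\<exists>T. T \<noteq> {} \<and> T \<subset> S \<and> epistasis l f T v)"

definition unique_max :: "nat \<Rightarrow> ((nat \<Rightarrow> bool) \<Rightarrow> real) \<Rightarrow> (nat \<Rightarrow> bool) \<Rightarrow> bool" where
  "unique_max l f g \<longleftrightarrow> g \<in> chroms l \<and> (\<forall>y \<in> chroms l. y \<noteq> g \<longrightarrow> f y < f g)"

definition strict_epi :: "nat \<Rightarrow> ((nat \<Rightarrow> bool) \<Rightarrow> real) \<Rightarrow> (nat \<Rightarrow> bool) \<Rightarrow> nat \<Rightarrow> nat \<Rightarrow> bool" where
  "strict_epi l f g u v \<longleftrightarrow> epistasis l f {u} v \<and>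
     Psi_at l f (Map.empty(u \<mapsto> \<not> g u)) v = {\<not> g v}"

end

theory Submission
  imports Defs
begin

theorem lemma7:
  fixes l :: nat and f :: "(nat \<Rightarrow> bool) \<Rightarrow> real" and g :: "nat \<Rightarrow> bool"
    and c :: nat and vs :: "nat \<Rightarrow> nat"
  assumes "l \<ge> 1"
    and "unique_max l f g"
    and "\<forall>S v. \<not> weak_epistasis l f S v"
    and "\<forall>u v. epistasis l f {u} v \<longrightarrow> strict_epi l f g u v"
    and "c \<ge> 1"
    and "inj_on vs {0..<c}"
    and "\<forall>i < c. epistasis l f {vs i} (vs ((i + 1) mod c))"
  shows "\<forall>a < c. \<forall>b < c. a \<noteq> b \<longrightarrow> strict_epi l f g (vs a) (vs b)"
proof -
  define A where "A = (\<lambda>u. Map.empty(u \<mapsto> \<not> g u))"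
  define M where "M = (\<lambda>i. Psi l f (A (vs i)))"
  have um: "g \<in> chroms l" "\<And>y. y \<in> chroms l \<Longrightarrow> y \<noteq> g \<Longrightarrow> f y < f g"
    using assms(2) unfolding unique_max_def by auto
  have Pe: "Psi l f Map.empty = {g}"
  proof
    show "Psi l f Map.empty \<subseteq> {g}"
      unfolding Psi_def agrees_def using um by (force simp: not_le)
    show "{g} \<subseteq> Psi l f Map.empty"
      unfolding Psi_def agrees_def using um by (force simp: le_less)
  qed
  have str: "Psi_at l f (A (vs i)) (vs (Suc i mod c)) = {\<not> g (vs (Suc i mod c))}" if "i < c" for i
    using assms(4,7) that unfolding strict_epi_def A_def by auto
  have ne: "M i \<noteq> {}" if "i < c" for i
    using str[OF that] unfolding M_def Psi_at_def by auto
  have nx: "\<forall>y \<in> M i. y (vs (Suc i mod c)) = (\<not> g (vs (Suc i mod c)))" if "i < c" for i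
    using str[OF that] unfolding M_def Psi_at_def by auto
  have Mmem: "y \<in> M i \<longleftrightarrow> y \<in> chroms l \<and> agrees y (A (vs i)) \<and>
      (\<forall>z \<in> chroms l. agrees z (A (vs i)) \<longrightarrow> f z \<le> f y)" for y i
    unfolding M_def Psi_def by auto
  have agA: "agrees y (A u) \<longleftrightarrow> y u = (\<not> g u)" for y u
    unfolding agrees_def A_def by auto
  have step: "f y \<le> f z" if "i < c" "y \<in> M i" "z \<in> M (Suc i mod c)" for i y z
  proof -
    have "y \<in> chroms l" using that(2) Mmem by blast
    moreover have "agrees y (A (vs (Suc i mod c)))" using nx[OF that(1)] that(2) agA by blast
    moreover have "\<forall>w \<in> chroms l. agrees w (A (vs (Suc i mod c))) \<longrightarrow> f w \<le> f z"
      using that(3) unfolding Mmem by blast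
    ultimately show ?thesis by blast
  qed
  have chain: "\<forall>y \<in> M i. \<forall>z \<in> M ((i + k) mod c). f y \<le> f z" if "i < c" for i k
  proof (induction k)
    case 0
    then show ?case using that Mmem by auto
  next
    case (Suc k)
    show ?case
    proof (intro ballI)
      fix y z assume y: "y \<in> M i" and z: "z \<in> M ((i + Suc k) mod c)"
      have cpos: "c > 0" using assms(5) by simp
      obtain w where w: "w \<in> M ((i + k) mod c)" using ne[of "(i+k) mod c"] cpos by auto
      have "(i + Suc k) mod c = Suc ((i + k) mod c) mod c" by (simp add: mod_Suc_eq)
      then have "f w \<le> f z" using step[of "(i+k) mod c" w z] w z cpos by auto
      moreover have "f y \<le> f w" using Suc y w by auto
      ultimately show "f y \<le> f z" by simp
    qed
  qed
  have anyij: "f y \<le> f z" if "i < c" "j < c" "y \<in> M i" "z \<in> M j" for i j y z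
  proof -
    have "(i + (j + c - i)) mod c = j" using that by simp
    then show ?thesis using chain[OF that(1), of "j + c - i"] that by auto
  qed
  have sub1: "M i \<subseteq> M (Suc i mod c)" if "i < c" for i
  proof
    fix y assume y: "y \<in> M i"
    have j: "Suc i mod c < c" using that by simp
    obtain w where w: "w \<in> M (Suc i mod c)" using ne[OF j] by auto
    have ych: "y \<in> chroms l" using y Mmem by auto
    have yag: "agrees y (A (vs (Suc i mod c)))" using nx[OF that] y agA by auto
    have "\<forall>z \<in> chroms l. agrees z (A (vs (Suc i mod c))) \<longrightarrow> f z \<le> f y"
    proof (intro ballI impI)
      fix z assume "z \<in> chroms l" "agrees z (A (vs (Suc i mod c)))"
      then have "f z \<le> f w" using w Mmem by auto
      also have "f w \<le> f y" using anyij[OF j that w y] .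
      finally show "f z \<le> f y" .
    qed
    then show "y \<in> M (Suc i mod c)" using ych yag Mmem by auto
  qed
  have subk: "M i \<subseteq> M ((i + k) mod c)" if "i < c" for i k
  proof (induction k)
    case 0 then show ?case using that by simp
  next
    case (Suc k)
    have "(i + Suc k) mod c = Suc ((i + k) mod c) mod c" by (simp add: mod_Suc_eq)
    moreover have "(i + k) mod c < c" using that by simp
    ultimately show ?case using Suc sub1[of "(i+k) mod c"] by auto
  qed
  have subij: "M i \<subseteq> M j" if "i < c" "j < c" for i j
  proof -
    have "(i + (j + c - i)) mod c = j" using that by simp
    then show ?thesis using subk[OF that(1), of "j + c - i"] by auto
  qed
  have inV: "vs i \<in> {0..<l}" if "i < c" for i
    using assms(7) that unfolding epistasis_def by blast
  show ?thesis
  proof (intro allI impI)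
    fix a b assume ab: "a < c" "b < c" "a \<noteq> b"
    have neq: "vs a \<noteq> vs b"
    proof
      assume "vs a = vs b"
      moreover have "a \<in> {0..<c}" "b \<in> {0..<c}" using ab by simp_all
      ultimately have "a = b" using inj_onD[OF assms(6)] by blast
      then show False using ab(3) by blast
    qed
    have allb: "\<forall>y \<in> M a. y (vs b) = (\<not> g (vs b))"
    proof
      fix y assume "y \<in> M a"
      then have "y \<in> M b" using subij[OF ab(1,2)] by blast
      then have "agrees y (A (vs b))" unfolding Mmem by blast
      then show "y (vs b) = (\<not> g (vs b))" using agA by blast
    qed
    then have P: "Psi_at l f (A (vs a)) (vs b) = {\<not> g (vs b)}"
    proof -
      have "Psi_at l f (A (vs a)) (vs b) = (\<lambda>y. y (vs b)) ` M a"
        unfolding Psi_at_def M_def by simp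
      also have "\<dots> = {\<not> g (vs b)}"
      proof
        show "(\<lambda>y. y (vs b)) ` M a \<subseteq> {\<not> g (vs b)}" using allb by blast
        obtain y where "y \<in> M a" using ne[OF ab(1)] by blast
        then show "{\<not> g (vs b)} \<subseteq> (\<lambda>y. y (vs b)) ` M a" using allb by force
      qed
      finally show ?thesis .
    qed
    have em: "(A (vs a))(vs a := None) = Map.empty"
      unfolding A_def by (rule ext) auto
    have P0: "Psi_at l f Map.empty (vs b) = {g (vs b)}"
      unfolding Psi_at_def Pe by simp
    have d: "dom (A (vs a)) = {vs a}" unfolding A_def by auto
    have dif: "Psi_at l f (A (vs a)) (vs b) \<noteq> Psi_at l f ((A (vs a))(vs a := None)) (vs b)"
      using P P0 em by simp
    have e1: "vs b \<in> {0..<l}" using inV[OF ab(2)] .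
    have e0: "vs a \<in> {0..<l}" using inV[OF ab(1)] .
    have e2: "{vs a} \<subseteq> {0..<l} - {vs b}" using e0 neq by simp
    have "epistasis l f {vs a} (vs b)"
      unfolding epistasis_def using e1 e2 d dif by auto
    then show "strict_epi l f g (vs a) (vs b)"
      unfolding strict_epi_def using P unfolding A_def by simp
  qed
qed

end
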